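(* Let $X$ be a $C^1$ vector field on a smooth manifold $M$ and let $p_0\in M$ satisfy $X(p_0)=0$. If the linearization $DX(p_0)$ has an eigenvalue $\lambda$ with $\mathrm{Re}\,\lambda>0$, then there exists an open neighborhood $B\subset M$ of $p_0$ such that the set $E$ of points $p\in M$ for which the solution $\gamma$ of $\dot\gamma=X\circ\gamma$, $\gamma(0)=p$, is defined and satisfies $\gamma(t)\in B$ for all $t\in[0,+\infty)$ has measure zero.
   Context: Manifolds are Hausdorff, second countable and finite-dimensional. A subset $A\subset M$ has measure zero if for every chart $(V,\psi)$ the set $\psi(A\cap V)$ has Lebesgue measure zero. *)

theory Defs
  imports "HOL-Analysis.Analysis"
begin

type_synonym ('p, 'n) chart = "'p set \<times> ('p \<Rightarrow> real^'n)"

definition is_chart :: "'p topology \<Rightarrow> ('p, 'n::finite) chart \<Rightarrow> bool" where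
  "is_chart M c \<longleftrightarrow> openin M (fst c) \<and> open (snd c ` fst c) \<and>
     homeomorphic_map (subtopology M (fst c)) (top_of_set (snd c ` fst c)) (snd c)"

fun iter_dd :: "('a::real_normed_vector \<Rightarrow> 'b::real_normed_vector) \<Rightarrow> 'a list \<Rightarrow> 'a \<Rightarrow> 'b" where
  "iter_dd f [] = f"
| "iter_dd f (v # vs) = (\<lambda>x. frechet_derivative (iter_dd f vs) (at x) v)"

definition smooth_on :: "'a::real_normed_vector set \<Rightarrow> ('a \<Rightarrow> 'b::real_normed_vector) \<Rightarrow> bool" where
  "smooth_on S f \<longleftrightarrow> (\<forall>vs. \<forall>x\<in>S. iter_dd f vs differentiable (at x))"

definition C1_on :: "'a::real_normed_vector set \<Rightarrow> ('a \<Rightarrow> 'b::real_normed_vector) \<Rightarrow> bool" where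
  "C1_on S f \<longleftrightarrow> (\<exists>f'. (\<forall>x\<in>S. (f has_derivative blinfun_apply (f' x)) (at x)) \<and> continuous_on S f')"

text \<open>Transition map from chart c1 to chart c2 (meaningful on snd c1 ` (fst c1 \<inter> fst c2)).\<close>

definition transition :: "('p, 'n::finite) chart \<Rightarrow> ('p, 'n) chart \<Rightarrow> real^'n \<Rightarrow> real^'n" where
  "transition c1 c2 = snd c2 \<circ> inv_into (fst c1) (snd c1)"

definition smooth_compat :: "('p, 'n::finite) chart \<Rightarrow> ('p, 'n) chart \<Rightarrow> bool" where
  "smooth_compat c1 c2 \<longleftrightarrow>
     smooth_on (snd c1 ` (fst c1 \<inter> fst c2)) (transition c1 c2) \<and>
     smooth_on (snd c2 ` (fst c1 \<inter> fst c2)) (transition c2 c1)"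

text \<open>A smooth manifold of dimension CARD('n): a Hausdorff, second countable
  topological space M with a smooth atlas A.\<close>

definition smooth_manifold :: "'p topology \<Rightarrow> ('p, 'n::finite) chart set \<Rightarrow> bool" where
  "smooth_manifold M A \<longleftrightarrow> Hausdorff_space M \<and> second_countable M \<and>
     (\<forall>c\<in>A. is_chart M c) \<and> topspace M \<subseteq> (\<Union>c\<in>A. fst c) \<and>
     (\<forall>c1\<in>A. \<forall>c2\<in>A. smooth_compat c1 c2)"

text \<open>The charts of the smooth structure (the maximal atlas determined by A).\<close>

definition mchart :: "'p topology \<Rightarrow> ('p, 'n::finite) chart set \<Rightarrow> ('p, 'n) chart \<Rightarrow> bool" where
  "mchart M A c \<longleftrightarrow> is_chart M c \<and> (\<forall>a\<in>A. smooth_compat a c)"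

definition measure_zero :: "'p topology \<Rightarrow> ('p, 'n::finite) chart set \<Rightarrow> 'p set \<Rightarrow> bool" where
  "measure_zero M A E \<longleftrightarrow> (\<forall>c. mchart M A c \<longrightarrow> snd c ` (E \<inter> fst c) \<in> null_sets lebesgue)"

text \<open>A vector field is given by its local representatives X c in every chart c,
  transforming by the derivative of the transition maps. It is C^1 if every
  local representative is C^1.\<close>

definition C1_vector_field :: "'p topology \<Rightarrow> ('p, 'n::finite) chart set \<Rightarrow>
     (('p, 'n) chart \<Rightarrow> real^'n \<Rightarrow> real^'n) \<Rightarrow> bool" where
  "C1_vector_field M A X \<longleftrightarrow>
     (\<forall>c. mchart M A c \<longrightarrow> C1_on (snd c ` fst c) (X c)) \<and>
     (\<forall>c1 c2. mchart M A c1 \<longrightarrow> mchart M A c2 \<longrightarrow>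
        (\<forall>x\<in>snd c1 ` (fst c1 \<inter> fst c2).
           X c2 (transition c1 c2 x) = frechet_derivative (transition c1 c2) (at x) (X c1 x)))"

definition integral_curve :: "'p topology \<Rightarrow> ('p, 'n::finite) chart set \<Rightarrow>
     (('p, 'n) chart \<Rightarrow> real^'n \<Rightarrow> real^'n) \<Rightarrow> (real \<Rightarrow> 'p) \<Rightarrow> real set \<Rightarrow> bool" where
  "integral_curve M A X \<gamma> J \<longleftrightarrow>
     continuous_map (top_of_set J) M \<gamma> \<and>
     (\<forall>c. mchart M A c \<longrightarrow> (\<forall>t\<in>J. \<gamma> t \<in> fst c \<longrightarrow>
        ((snd c \<circ> \<gamma>) has_vector_derivative X c (snd c (\<gamma> t))) (at t within J)))"

definition complex_eigenvalue :: "(real^'n \<Rightarrow> real^'n) \<Rightarrow> complex \<Rightarrow> bool" where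
  "complex_eigenvalue L lam \<longleftrightarrow>
     (\<exists>v::complex^'n. v \<noteq> 0 \<and>
        (\<chi> i. \<Sum>j\<in>UNIV. complex_of_real (matrix L $ i $ j) * v $ j) = lam *s v)"

end

theory Submission
  imports Defs "Jordan_Normal_Form.Schur_Decomposition"
begin

lemma cone_negligible:
  fixes F :: "real^'n \<Rightarrow> real" and S :: "(real^'n) set"
  assumes contF: "continuous_on UNIV F"
    and hom: "\<And>t w. F (t *\<^sub>R w) = t^2 * F w"
    and Fv: "F v > 0"
    and SF: "\<And>x y. x \<in> S \<Longrightarrow> y \<in> S \<Longrightarrow> F (x - y) \<le> 0"
  shows "negligible S"
proof -
  have v0: "v \<noteq> 0" using Fv hom[of 0 v] by auto
  have "isCont F v" using contF by (simp add: continuous_on_eq_continuous_at)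
  then obtain \<theta> where th: "\<theta> > 0" and thF: "\<And>u. dist u v < \<theta> \<Longrightarrow> dist (F u) (F v) < F v"
    using Fv unfolding continuous_at_eps_delta by blast
  have pos: "F u > 0" if "norm (u - v) < \<theta>" for u
    using thF[of u] that by (auto simp: dist_norm)
  define \<pi> where "\<pi> x = x - ((x \<bullet> v) / (v \<bullet> v)) *\<^sub>R v" for x
  define K where "K = 1 + norm v / \<theta>"
  have key: "norm (x - y) \<le> K * norm (\<pi> x - \<pi> y)" if xy: "x \<in> S" "y \<in> S" for x y
  proof -
    define d where "d = x - y"
    define t where "t = (d \<bullet> v) / (v \<bullet> v)"
    define h where "h = d - t *\<^sub>R v"
    have hpi: "h = \<pi> x - \<pi> y" unfolding h_def t_def d_def \<pi>_def
      by (simp add: inner_diff_left algebra_simps diff_divide_distrib)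
    have dh: "d = t *\<^sub>R v + h" unfolding h_def by simp
    have "norm d \<le> K * norm h"
    proof (cases "t = 0")
      case True
      then show ?thesis using dh unfolding K_def using th
        by (simp add: distrib_right)
    next
      case False
      have "\<not> norm h < \<theta> * \<bar>t\<bar>"
      proof
        assume a: "norm h < \<theta> * \<bar>t\<bar>"
        have "norm ((v + (1/t) *\<^sub>R h) - v) < \<theta>"
          using a False by (simp add: field_simps)
        then have "F (v + (1/t) *\<^sub>R h) > 0" by (rule pos)
        moreover have "d = t *\<^sub>R (v + (1/t) *\<^sub>R h)" using dh False
          by (simp add: scaleR_add_right)
        ultimately have "F d > 0" using hom False by (simp add: zero_less_power2 )
        then show False using SF[OF xy] d_def by simp
      qed
      then have hh: "\<theta> * \<bar>t\<bar> \<le> norm h" by simp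
      have "norm d \<le> \<bar>t\<bar> * norm v + norm h" using dh
        by (metis norm_scaleR norm_triangle_ineq)
      also have "\<bar>t\<bar> * norm v \<le> (norm h / \<theta>) * norm v"
        using hh th by (intro mult_right_mono) (auto simp: field_simps)
      finally show ?thesis unfolding K_def using th by (simp add: field_simps)
    qed
    then show ?thesis using hpi d_def by simp
  qed
  have inj: "inj_on \<pi> S"
  proof (rule inj_onI)
    fix x y assume "x \<in> S" "y \<in> S" "\<pi> x = \<pi> y"
    with key[of x y] show "x = y" by simp
  qed
  define g where "g = inv_into S \<pi>"
  have neg1: "negligible (\<pi> ` S)"
  proof (rule negligible_subset)
    show "negligible {z. v \<bullet> z = 0}" using v0 by (intro negligible_hyperplane) simp
    show "\<pi> ` S \<subseteq> {z. v \<bullet> z = 0}" using v0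
      by (auto simp: \<pi>_def inner_diff_right inner_commute)
  qed
  have "negligible (g ` (\<pi> ` S))"
  proof (rule negligible_locally_Lipschitz_image[OF order_refl neg1])
    fix z assume z: "z \<in> \<pi> ` S"
    show "\<exists>T B. open T \<and> z \<in> T \<and> (\<forall>y\<in>\<pi> ` S \<inter> T. norm (g y - g z) \<le> B * norm (y - z))"
    proof (intro exI conjI ballI)
      show "open (UNIV :: (real^'n) set)" by simp
      show "z \<in> UNIV" by simp
      fix y assume "y \<in> \<pi> ` S \<inter> UNIV"
      then obtain a where a: "a \<in> S" "y = \<pi> a" by auto
      obtain b where b: "b \<in> S" "z = \<pi> b" using z by auto
      have "g y = a" "g z = b" using a b inj by (auto simp: g_def)
      then show "norm (g y - g z) \<le> K * norm (y - z)" using key[OF a(1) b(1)] a b by simp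
    qed
  qed
  moreover have "g ` (\<pi> ` S) = S" unfolding g_def using inj by simp
  ultimately show ?thesis by simp
qed

lemma inner_mult_self: "inner (y::complex) (c * y) = Re c * (cmod y)^2"
  unfolding inner_complex_def cmod_power2 by (simp add: algebra_simps power2_eq_square)

lemma S1_sq_le:
  fixes a :: "'n::finite \<Rightarrow> real"
  shows "(\<Sum>i\<in>UNIV. a i)^2 \<le> real CARD('n) * (\<Sum>i\<in>UNIV. (a i)^2)"
  using Cauchy_Schwarz_ineq_sum[of "\<lambda>_. 1" a UNIV] by simp

lemma key_ineq:
  fixes T :: "complex^'n^'n" and y g :: "complex^'n" and \<sigma> :: "'n \<Rightarrow> bool"
  assumes du: "\<And>i. \<sigma> i \<Longrightarrow> \<beta> + \<epsilon> \<le> Re (T$i$i)"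
    and ds: "\<And>i. \<not> \<sigma> i \<Longrightarrow> Re (T$i$i) \<le> \<beta> - \<epsilon>"
    and off: "\<And>i j. i \<noteq> j \<Longrightarrow> cmod (T$i$j) \<le> \<delta>"
    and gb: "\<And>i. cmod (g$i) \<le> \<gamma> * (\<Sum>j\<in>UNIV. cmod (y$j))"
    and small: "(\<delta> + \<gamma>) * real CARD('n) \<le> \<epsilon> / 2"
    and pos: "\<epsilon> > 0" "\<delta> \<ge> 0" "\<gamma> \<ge> 0"
  shows "(2*\<beta>+\<epsilon>) * (\<Sum>i\<in>UNIV. (if \<sigma> i then 1 else -1) * (cmod (y$i))^2)
    \<le> (\<Sum>i\<in>UNIV. (if \<sigma> i then 1 else -1) * 2 * inner (y$i) ((T *v y)$i + g$i))"
proof -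
  define S1 where "S1 = (\<Sum>j\<in>UNIV. cmod (y$j))"
  define S2 where "S2 = (\<Sum>j\<in>UNIV. (cmod (y$j))^2)"
  define V where "V = (\<Sum>i\<in>UNIV. (if \<sigma> i then 1 else -1) * (cmod (y$i))^2)"
  define \<kappa> where "\<kappa> = \<delta> + \<gamma>"
  have S1: "S1 \<ge> 0" unfolding S1_def by (intro sum_nonneg) auto
  have \<kappa>0: "\<kappa> \<ge> 0" using pos by (simp add: \<kappa>_def)
  define r where "r i = (\<Sum>j\<in>UNIV-{i}. T$i$j * y$j)" for i
  have Ty: "(T *v y)$i = T$i$i * y$i + r i" for i
  proof -
    have "(T *v y)$i = (\<Sum>j\<in>UNIV. T$i$j * y$j)" by (simp add: matrix_vector_mult_def)
    also have "\<dots> = T$i$i * y$i + r i" unfolding r_def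
      by (subst sum.remove[of UNIV i]) auto
    finally show ?thesis .
  qed
  have rb: "cmod (r i) \<le> \<delta> * S1" for i
  proof -
    have "cmod (r i) \<le> (\<Sum>j\<in>UNIV-{i}. cmod (T$i$j * y$j))" unfolding r_def by (rule norm_sum)
    also have "\<dots> \<le> (\<Sum>j\<in>UNIV-{i}. \<delta> * cmod (y$j))"
      by (intro sum_mono) (auto simp: norm_mult intro!: mult_right_mono off)
    also have "\<dots> \<le> (\<Sum>j\<in>UNIV. \<delta> * cmod (y$j))"
      using pos by (intro sum_mono2) auto
    finally show ?thesis by (simp add: S1_def sum_distrib_left)
  qed
  have hb: "cmod (r i + g$i) \<le> \<kappa> * S1" for i
    using norm_triangle_ineq[of "r i" "g$i"] rb[of i] gb[of i] by (simp add: \<kappa>_def S1_def distrib_right)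
  have each: "(if \<sigma> i then 1 else -1) * 2 * inner (y$i) ((T *v y)$i + g$i)
      \<ge> 2 * \<beta> * ((if \<sigma> i then 1 else -1) * (cmod (y$i))^2) + 2 * \<epsilon> * (cmod (y$i))^2
        - 2 * \<kappa> * S1 * cmod (y$i)" for i
  proof -
    have "inner (y$i) ((T *v y)$i + g$i) = Re (T$i$i) * (cmod (y$i))^2 + inner (y$i) (r i + g$i)"
      by (simp add: Ty inner_add_right inner_mult_self add.assoc)
    moreover have "\<bar>inner (y$i) (r i + g$i)\<bar> \<le> cmod (y$i) * (\<kappa> * S1)"
      using Cauchy_Schwarz_ineq2[of "y$i" "r i + g$i"] hb[of i]
      by (meson mult_left_mono norm_ge_zero order_trans)
    moreover have "(if \<sigma> i then 1 else -1) * Re (T$i$i) * (cmod (y$i))^2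
        \<ge> \<beta> * ((if \<sigma> i then 1 else -1) * (cmod (y$i))^2) + \<epsilon> * (cmod (y$i))^2"
    proof (cases "\<sigma> i")
      case True
      have "(\<beta> + \<epsilon>) * (cmod (y$i))^2 \<le> Re (T$i$i) * (cmod (y$i))^2"
        using du[OF True] by (intro mult_right_mono) auto
      then show ?thesis using True by (simp add: algebra_simps)
    next
      case False
      have "Re (T$i$i) * (cmod (y$i))^2 \<le> (\<beta> - \<epsilon>) * (cmod (y$i))^2"
        using ds[OF False] by (intro mult_right_mono) auto
      then show ?thesis using False by (simp add: algebra_simps)
    qed
    ultimately show ?thesis by (cases "\<sigma> i") (auto simp: algebra_simps)
  qed
  have "(\<Sum>i\<in>UNIV. (if \<sigma> i then 1 else -1) * 2 * inner (y$i) ((T *v y)$i + g$i))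
     \<ge> (\<Sum>i\<in>UNIV. 2 * \<beta> * ((if \<sigma> i then 1 else -1) * (cmod (y$i))^2) + 2 * \<epsilon> * (cmod (y$i))^2
        - 2 * \<kappa> * S1 * cmod (y$i))"
    by (rule sum_mono) (rule each)
  also have "(\<Sum>i\<in>UNIV. 2 * \<beta> * ((if \<sigma> i then 1 else -1) * (cmod (y$i))^2) + 2 * \<epsilon> * (cmod (y$i))^2
        - 2 * \<kappa> * S1 * cmod (y$i)) = 2 * \<beta> * V + 2 * \<epsilon> * S2 - 2 * \<kappa> * S1 * S1"
    by (simp add: V_def S2_def S1_def sum.distrib sum_subtractf sum_distrib_left)
  finally have A: "2 * \<beta> * V + 2 * \<epsilon> * S2 - 2 * \<kappa> * S1 * S1
      \<le> (\<Sum>i\<in>UNIV. (if \<sigma> i then 1 else -1) * 2 * inner (y$i) ((T *v y)$i + g$i))" .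
  have "S1 * S1 \<le> real CARD('n) * S2" using S1_sq_le[of "\<lambda>j. cmod (y$j)"]
    by (simp add: S1_def S2_def power2_eq_square)
  then have "2 * \<kappa> * (S1 * S1) \<le> 2 * \<kappa> * (real CARD('n) * S2)" using \<kappa>0 by (intro mult_left_mono) auto
  also have "\<dots> = 2 * (\<kappa> * real CARD('n)) * S2" by simp
  also have "\<dots> \<le> 2 * (\<epsilon>/2) * S2" using small \<kappa>_def
    by (intro mult_right_mono mult_left_mono) (auto simp: S2_def intro: sum_nonneg)
  finally have B: "2 * \<kappa> * S1 * S1 \<le> \<epsilon> * S2" by (simp add: mult.assoc)
  have "V \<le> S2" unfolding V_def S2_def by (intro sum_mono) auto
  then have C: "\<epsilon> * V \<le> \<epsilon> * S2" using pos by simp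
  show ?thesis using A B C unfolding V_def[symmetric] by (simp add: algebra_simps)
qed

lemma cv_lin: "bounded_linear (\<lambda>x::real^'n. (Q *v (\<chi> j. complex_of_real (x$j)))$i)"
proof -
  have "bounded_linear (\<lambda>x::real^'n. \<Sum>j\<in>UNIV. Q$i$j * complex_of_real (x$j))"
  proof (rule bounded_linear_sum)
    fix j
    show "bounded_linear (\<lambda>x::real^'n. Q$i$j * complex_of_real (x$j))"
      by (rule bounded_linear_compose[OF bounded_linear_mult_right]
          bounded_linear_compose[OF bounded_linear_of_real] bounded_linear_vec_nth)+
  qed
  then show ?thesis by (simp add: matrix_vector_mult_def)
qed

lemma growth_contra:
  fixes V :: "real \<Rightarrow> real" and V' :: "real \<Rightarrow> real"
  assumes der: "\<And>t. t \<ge> 0 \<Longrightarrow> (V has_real_derivative V' t) (at t within {0..})"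
    and ge: "\<And>t. t \<ge> 0 \<Longrightarrow> V' t \<ge> c * V t"
    and c: "c > 0"
    and bnd: "\<And>t. t \<ge> 0 \<Longrightarrow> V t \<le> K"
  shows "V 0 \<le> 0"
proof (rule ccontr)
  assume "\<not> V 0 \<le> 0"
  then have V0: "V 0 > 0" by simp
  define \<phi> where "\<phi> t = V t * exp (- c * t)" for t
  have dphi: "(\<phi> has_real_derivative (V' t * exp (- c * t) - c * (V t * exp (- c * t)))) (at t within {0..})"
    if "t \<ge> 0" for t
    unfolding \<phi>_def using der[OF that]
    by (auto intro!: derivative_eq_intros simp: algebra_simps)
  have mono: "\<phi> 0 \<le> \<phi> t" if t: "t \<ge> 0" for t
  proof (rule DERIV_nonneg_imp_increasing_open[OF t])
    fix x assume x: "0 < x" "x < t"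
    have "at x within {0..} = at x" using x by (intro at_within_interior) (simp add: interior_real_atLeast)
    then have "(\<phi> has_real_derivative (V' x * exp (- c * x) - c * (V x * exp (- c * x)))) (at x)"
      using dphi[of x] x by simp
    moreover have "V' x * exp (- c * x) - c * (V x * exp (- c * x)) \<ge> 0"
      using ge[of x] x by (simp add: algebra_simps mult_right_mono)
    ultimately show "\<exists>y. (\<phi> has_real_derivative y) (at x) \<and> 0 \<le> y" by blast
  next
    show "continuous_on {0..t} \<phi>"
    proof (rule continuous_on_subset[of "{0..}"])
      show "continuous_on {0..} \<phi>" unfolding continuous_on_eq_continuous_within
        using dphi DERIV_continuous by fastforce
    qed auto
  qed
  define t where "t = (max K 0) / (c * V 0) + 1"
  have "max K 0 / (c * V 0) \<ge> 0" using c V0 by simp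
  then have t0: "t > 0" unfolding t_def by linarith
  have "V 0 \<le> V t * exp (- c * t)" using mono[of t] t0 by (simp add: \<phi>_def)
  then have "V 0 * exp (c * t) \<le> V t" by (simp add: exp_minus field_simps)
  moreover have "1 + c * t \<le> exp (c * t)" by (rule exp_ge_add_one_self)
  then have "V 0 * (1 + c * t) \<le> V 0 * exp (c * t)" using V0 by simp
  moreover have "V 0 * (1 + c * t) > max K 0"
  proof -
    have cv: "c * V 0 \<noteq> 0" using c V0 by simp
    have "V 0 * (c * t) = (c * V 0) * (max K 0 / (c * V 0)) + c * V 0" unfolding t_def
      by (simp add: algebra_simps)
    also have "\<dots> = max K 0 + c * V 0" using cv by simp
    finally have "V 0 * (c * t) = max K 0 + c * V 0" .
    moreover have "c * V 0 > 0" using c V0 by simp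
    ultimately have "V 0 * (c * t) > max K 0" by linarith
    then show ?thesis using V0 by (simp add: algebra_simps)
  qed
  ultimately show False using bnd[of t] t0 by simp
qed

lemma row_bound:
  fixes M :: "complex^'n^'n" and y :: "complex^'n"
  shows "cmod ((M *v y)$i) \<le> (\<Sum>j\<in>UNIV. cmod (M$i$j)) * (\<Sum>j\<in>UNIV. cmod (y$j))"
proof -
  have "cmod ((M *v y)$i) \<le> (\<Sum>j\<in>UNIV. cmod (M$i$j * y$j))"
    unfolding matrix_vector_mult_def by (simp add: norm_sum)
  also have "\<dots> \<le> (\<Sum>j\<in>UNIV. cmod (M$i$j) * (\<Sum>j\<in>UNIV. cmod (y$j)))"
    by (intro sum_mono) (auto simp: norm_mult intro!: mult_left_mono member_le_sum)
  finally show ?thesis by (simp add: sum_distrib_right)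
qed

lemma total_bound:
  fixes M :: "complex^'n^'n" and y :: "complex^'n"
  shows "(\<Sum>i\<in>UNIV. cmod ((M *v y)$i)) \<le> (\<Sum>i\<in>UNIV. \<Sum>j\<in>UNIV. cmod (M$i$j)) * (\<Sum>j\<in>UNIV. cmod (y$j))"
  using sum_mono[of UNIV "\<lambda>i. cmod ((M *v y)$i)", OF row_bound]
  by (simp add: sum_distrib_right)

lemma row_le_total:
  fixes M :: "complex^'n^'n"
  shows "(\<Sum>j\<in>UNIV. cmod (M$i$j)) \<le> (\<Sum>i\<in>UNIV. \<Sum>j\<in>UNIV. cmod (M$i$j))"
  by (rule member_le_sum[of i UNIV "\<lambda>i. \<Sum>j\<in>UNIV. cmod (M$i$j)"]) (auto intro: sum_nonneg)

lemma l1_le_norm: "(\<Sum>j\<in>UNIV. \<bar>(x::real^'n)$j\<bar>) \<le> real CARD('n) * norm x"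
proof -
  have "(\<Sum>j\<in>UNIV. \<bar>x$j\<bar>) \<le> (\<Sum>j\<in>(UNIV::'n set). norm x)"
    by (intro sum_mono) (rule component_le_norm_cart)
  then show ?thesis by simp
qed

lemma cone_growth:
  fixes P Q T :: "complex^'n^'n" and L f :: "real^'n \<Rightarrow> real^'n" and x1 x2 :: "real \<Rightarrow> real^'n"
  assumes PQ: "P ** Q = Finite_Cartesian_Product.mat 1"
    and QM: "Q ** (\<chi> i j. complex_of_real (matrix L $ i $ j)) = T ** Q"
    and Llin: "bounded_linear L"
    and du: "\<And>i. \<sigma> i \<Longrightarrow> \<beta> + \<epsilon> \<le> Re (T$i$i)"
    and ds: "\<And>i. \<not> \<sigma> i \<Longrightarrow> Re (T$i$i) \<le> \<beta> - \<epsilon>"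
    and off: "\<And>i j. i \<noteq> j \<Longrightarrow> cmod (T$i$j) \<le> \<delta>"
    and small: "(\<delta> + \<eta> * (\<Sum>i\<in>UNIV. \<Sum>j\<in>UNIV. cmod (Q$i$j)) * (\<Sum>i\<in>UNIV. \<Sum>j\<in>UNIV. cmod (P$i$j))
        * real CARD('n)) * real CARD('n) \<le> \<epsilon> / 2"
    and pos: "\<epsilon> > 0" "\<delta> \<ge> 0" "\<eta> \<ge> 0" "\<beta> \<ge> 0"
    and d1: "\<And>t. t \<ge> 0 \<Longrightarrow> (x1 has_vector_derivative f (x1 t)) (at t within {0..})"
    and d2: "\<And>t. t \<ge> 0 \<Longrightarrow> (x2 has_vector_derivative f (x2 t)) (at t within {0..})"
    and rem: "\<And>t. t \<ge> 0 \<Longrightarrow> norm (f (x1 t) - f (x2 t) - L (x1 t - x2 t)) \<le> \<eta> * norm (x1 t - x2 t)"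
    and bnd: "\<And>t. t \<ge> 0 \<Longrightarrow> norm (x1 t - x2 t) \<le> R"
  shows "(\<Sum>i\<in>UNIV. (if \<sigma> i then 1 else -1) *
           (cmod ((Q *v (\<chi> j. complex_of_real ((x1 0 - x2 0)$j)))$i))^2) \<le> 0"
proof -
  define cv :: "real^'n \<Rightarrow> complex^'n" where "cv x = (\<chi> j. complex_of_real (x$j))" for x
  define Mc :: "complex^'n^'n" where "Mc = (\<chi> i j. complex_of_real (matrix L $ i $ j))"
  define Cq where "Cq = (\<Sum>i\<in>UNIV. \<Sum>j\<in>UNIV. cmod (Q$i$j))"
  define Cp where "Cp = (\<Sum>i\<in>UNIV. \<Sum>j\<in>UNIV. cmod (P$i$j))"
  define N where "N = real CARD('n)"
  have Cq0: "Cq \<ge> 0" "Cp \<ge> 0" unfolding Cq_def Cp_def by (auto intro!: sum_nonneg)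
  have N0: "N \<ge> 0" by (simp add: N_def)
  define w where "w t = x1 t - x2 t" for t
  define w' where "w' t = f (x1 t) - f (x2 t)" for t
  define \<rho> where "\<rho> t = w' t - L (w t)" for t
  define y where "y t = Q *v cv (w t)" for t
  define y' where "y' t = Q *v cv (w' t)" for t
  define g where "g t = Q *v cv (\<rho> t)" for t
  define s where "s i = (if \<sigma> i then 1 else -1 :: real)" for i
  define V where "V t = (\<Sum>i\<in>UNIV. s i * ((Re (y t $ i))^2 + (Im (y t $ i))^2))" for t
  define V' where "V' t = (\<Sum>i\<in>UNIV. s i * (2 * Re (y t $ i) * Re (y' t $ i) + 2 * Im (y t $ i) * Im (y' t $ i)))" for t
  define S1 where "S1 z = (\<Sum>j\<in>UNIV. cmod (z$j))" for z :: "complex^'n"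
  have S1_0: "S1 z \<ge> 0" for z unfolding S1_def by (intro sum_nonneg) auto
  have S1cv: "S1 (cv x) = (\<Sum>j\<in>UNIV. \<bar>x$j\<bar>)" for x by (simp add: S1_def cv_def)
  have cv_add: "cv (a + b) = cv a + cv b" for a b
    by (simp add: cv_def Finite_Cartesian_Product.vec_eq_iff)
  have cvL: "cv (L x) = Mc *v cv x" for x
  proof -
    have "L x = matrix L *v x" using Llin by (simp add: bounded_linear.linear matrix_works)
    then show ?thesis
      by (simp add: cv_def Mc_def Finite_Cartesian_Product.vec_eq_iff matrix_vector_mult_def)
  qed
  have QMc: "Q *v (Mc *v z) = T *v (Q *v z)" for z
    by (simp add: matrix_vector_mul_assoc QM[folded Mc_def])
  have y'eq: "y' t = T *v y t + g t" for t
  proof -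
    have "w' t = L (w t) + \<rho> t" by (simp add: \<rho>_def)
    then have "cv (w' t) = Mc *v cv (w t) + cv (\<rho> t)" by (simp add: cv_add cvL)
    then show ?thesis by (simp add: y'_def y_def g_def matrix_vector_right_distrib QMc)
  qed
  have dw: "(w has_vector_derivative w' t) (at t within {0..})" if "t \<ge> 0" for t
    unfolding w_def w'_def by (rule has_vector_derivative_diff[OF d1[OF that] d2[OF that]])
  have dy: "((\<lambda>t. y t $ i) has_vector_derivative y' t $ i) (at t within {0..})" if "t \<ge> 0" for t i
    using bounded_linear.has_vector_derivative[OF cv_lin[of Q i] dw[OF that]]
    by (simp add: y_def y'_def cv_def)
  have dRe: "((\<lambda>t. Re (y t $ i)) has_real_derivative Re (y' t $ i)) (at t within {0..})" if "t \<ge> 0" for t i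
    using bounded_linear.has_vector_derivative[OF bounded_linear_Re dy[OF that]]
    by (simp add: has_real_derivative_iff_has_vector_derivative)
  have dIm: "((\<lambda>t. Im (y t $ i)) has_real_derivative Im (y' t $ i)) (at t within {0..})" if "t \<ge> 0" for t i
    using bounded_linear.has_vector_derivative[OF bounded_linear_Im dy[OF that]]
    by (simp add: has_real_derivative_iff_has_vector_derivative)
  define a where "a i t = Re (y t $ i)" for i t
  define b where "b i t = Im (y t $ i)" for i t
  have Vab: "V = (\<lambda>t. \<Sum>i\<in>UNIV. s i * ((a i t)^2 + (b i t)^2))"
    by (simp add: V_def a_def b_def fun_eq_iff)
  have V'ab: "V' t = (\<Sum>i\<in>UNIV. s i * (2 * a i t * Re (y' t $ i) + 2 * b i t * Im (y' t $ i)))" for t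
    by (simp add: V'_def a_def b_def)
  have dV: "(V has_real_derivative V' t) (at t within {0..})" if "t \<ge> 0" for t
  proof -
    have da: "(a i has_real_derivative Re (y' t $ i)) (at t within {0..})" for i
      using dRe[OF that] by (simp add: a_def[abs_def])
    have db: "(b i has_real_derivative Im (y' t $ i)) (at t within {0..})" for i
      using dIm[OF that] by (simp add: b_def[abs_def])
    show ?thesis unfolding Vab V'ab
      by (auto intro!: derivative_eq_intros da db sum.cong simp: algebra_simps)
  qed
  have wS1: "norm (w t) \<le> Cp * S1 (y t)" for t
  proof -
    have Py: "P *v y t = cv (w t)" by (simp add: y_def matrix_vector_mul_assoc PQ)
    have "norm (w t) \<le> (\<Sum>j\<in>UNIV. \<bar>w t $ j\<bar>)" by (rule norm_le_l1_cart)
    also have "\<dots> = S1 (P *v y t)" using Py by (simp add: S1cv)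
    also have "\<dots> \<le> Cp * S1 (y t)" unfolding S1_def Cp_def by (rule total_bound)
    finally show ?thesis .
  qed
  have yS1: "S1 (y t) \<le> Cq * N * norm (w t)" for t
  proof -
    have "S1 (y t) \<le> Cq * S1 (cv (w t))" unfolding S1_def Cq_def y_def by (rule total_bound)
    also have "\<dots> \<le> Cq * (N * norm (w t))" unfolding S1cv N_def
      by (intro mult_left_mono l1_le_norm Cq0)
    finally show ?thesis by (simp add: mult.assoc)
  qed
  have gb: "cmod (g t $ i) \<le> (\<eta> * Cq * Cp * N) * S1 (y t)" if t: "t \<ge> 0" for t i
  proof -
    have A: "cmod (g t $ i) \<le> (\<Sum>j\<in>UNIV. cmod (Q$i$j)) * S1 (cv (\<rho> t))"
      unfolding g_def S1_def by (rule row_bound)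
    have B: "(\<Sum>j\<in>UNIV. cmod (Q$i$j)) * S1 (cv (\<rho> t)) \<le> Cq * (N * norm (\<rho> t))" unfolding S1cv N_def Cq_def
      by (intro mult_mono row_le_total l1_le_norm) (auto intro!: sum_nonneg)
    have C: "norm (\<rho> t) \<le> \<eta> * norm (w t)" using rem[OF t]
      by (simp add: \<rho>_def w_def w'_def)
    have D: "\<eta> * norm (w t) \<le> \<eta> * (Cp * S1 (y t))" using wS1 pos by (intro mult_left_mono) auto
    have E: "norm (\<rho> t) \<le> \<eta> * (Cp * S1 (y t))" using C D by linarith
    have F: "Cq * (N * norm (\<rho> t)) \<le> Cq * (N * (\<eta> * (Cp * S1 (y t))))"
      using Cq0 N0 E by (intro mult_left_mono) auto
    show ?thesis using A B F by (simp add: algebra_simps)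
  qed
  have V'eq: "V' t = (\<Sum>i\<in>UNIV. s i * 2 * inner (y t $ i) ((T *v y t) $ i + g t $ i))" for t
    unfolding V'_def y'eq inner_complex_def by (intro sum.cong) (auto simp: algebra_simps)
  have Veq: "V t = (\<Sum>i\<in>UNIV. s i * (cmod (y t $ i))^2)" for t
    unfolding V_def by (simp add: cmod_power2)
  have ge: "V' t \<ge> (2*\<beta>+\<epsilon>) * V t" if t: "t \<ge> 0" for t
    unfolding V'eq Veq s_def
  proof (rule key_ineq[where \<delta>=\<delta> and \<gamma>="\<eta> * Cq * Cp * N"])
    show "\<And>i. cmod (g t $ i) \<le> \<eta> * Cq * Cp * N * (\<Sum>j\<in>UNIV. cmod (y t $ j))"
      using gb[OF t] by (simp add: S1_def)
    show "(\<delta> + \<eta> * Cq * Cp * N) * real CARD('n) \<le> \<epsilon> / 2" using small by (simp add: Cq_def Cp_def N_def)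
    show "0 \<le> \<eta> * Cq * Cp * N" using pos Cq0 N0 by simp
  qed (use du ds off pos in auto)
  have Vb: "V t \<le> (Cq * N * R)^2" if t: "t \<ge> 0" for t
  proof -
    have "V t \<le> (\<Sum>i\<in>UNIV. cmod (y t $ i) * S1 (y t))" unfolding Veq
    proof (intro sum_mono)
      fix i
      have "cmod (y t $ i) \<le> S1 (y t)" unfolding S1_def by (rule member_le_sum) auto
      then have h1: "(cmod (y t $ i))^2 \<le> cmod (y t $ i) * S1 (y t)"
        by (simp add: power2_eq_square mult_left_mono)
      have h0: "0 \<le> (cmod (y t $ i))^2" by simp
      show "s i * (cmod (y t $ i))^2 \<le> cmod (y t $ i) * S1 (y t)"
      proof (cases "\<sigma> i")
        case True then show ?thesis using h1 by (simp add: s_def)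
      next
        case False then have "s i * (cmod (y t $ i))^2 = -((cmod (y t $ i))^2)" by (simp add: s_def)
        then show ?thesis using h1 h0 by linarith
      qed
    qed
    also have "\<dots> = S1 (y t) * S1 (y t)" by (simp add: S1_def sum_distrib_right)
    also have "S1 (y t) \<le> Cq * N * R"
      using yS1[of t] bnd[OF t] Cq0 N0 by (smt (verit) mult_left_mono mult_nonneg_nonneg w_def)
    then have "S1 (y t) * S1 (y t) \<le> (Cq * N * R) * (Cq * N * R)"
      using S1_0[of "y t"] by (intro mult_mono) auto
    finally show ?thesis by (simp add: power2_eq_square)
  qed
  have c: "2*\<beta>+\<epsilon> > 0" using pos by simp
  have "V 0 \<le> 0" by (rule growth_contra[OF dV _ c Vb]) (use ge in \<open>auto simp: algebra_simps\<close>)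
  then show ?thesis unfolding Veq s_def y_def w_def cv_def .
qed

lemma jnf_part:
  fixes M :: "complex^'n^'n" and lam :: complex and v :: "complex^'n"
  assumes v0: "v \<noteq> 0" and ev: "M *v v = lam *s v" and lpos: "Re lam > 0"
  shows "\<exists>\<beta> \<epsilon>. 0 \<le> \<beta> \<and> 0 < \<epsilon> \<and> (\<exists>Pn Qn Bn :: complex^'n^'n. \<exists>(ie::'n \<Rightarrow> nat) k.
     inj ie \<and> (\<forall>a. ie a < CARD('n)) \<and> Pn ** Qn = Finite_Cartesian_Product.mat 1 \<and> Qn ** Pn = Finite_Cartesian_Product.mat 1 \<and> M = Pn ** Bn ** Qn \<and>
     (\<forall>a b. ie b < ie a \<longrightarrow> Bn$a$b = 0) \<and> (\<forall>a. ie a < k \<longrightarrow> Re (Bn$a$a) \<ge> \<beta> + \<epsilon>) \<and>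
     (\<forall>a. \<not> ie a < k \<longrightarrow> Re (Bn$a$a) \<le> \<beta> - \<epsilon>) \<and> (\<exists>a. ie a = 0) \<and> 0 < k)"
proof -
  define n where "n = CARD('n)"
  obtain e where e: "bij_betw e {0..<n} (UNIV::'n set)"
    using ex_bij_betw_nat_finite[of "UNIV::'n set"] unfolding n_def by auto
  define ie where "ie = inv_into {0..<n} e"
  have ie: "bij_betw ie UNIV {0..<n}" unfolding ie_def by (rule bij_betw_inv_into[OF e])
  have ie_lt: "ie a < n" for a using ie by (auto simp: bij_betw_def)
  have e_ie: "e (ie a) = a" for a unfolding ie_def using e
    by (meson UNIV_I bij_betw_inv_into_right)
  have ie_e: "k < n \<Longrightarrow> ie (e k) = k" for k unfolding ie_def using e
    by (simp add: bij_betw_inv_into_left)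
  have inj_ie: "inj ie" using ie by (auto simp: bij_betw_def)
  define tr :: "complex mat \<Rightarrow> complex^'n^'n" where "tr X = (\<chi> a b. X $$ (ie a, ie b))" for X
  have sum_re: "(\<Sum>c\<in>UNIV. g (ie c)) = (\<Sum>k\<in>{0..<n}. g k)" for g :: "nat \<Rightarrow> complex"
    using sum.reindex_bij_betw[OF ie, of g] .
  have tr_mult: "tr (X * Y) = tr X ** tr Y" if "X \<in> carrier_mat n n" "Y \<in> carrier_mat n n" for X Y
    using that
    by (auto simp: tr_def matrix_matrix_mult_def Finite_Cartesian_Product.vec_eq_iff ie_lt index_mult_mat scalar_prod_def
        sum_re[of "\<lambda>k. X $$ (ie _, k) * Y $$ (k, ie _)"])
  have tr_one: "tr (1\<^sub>m n) = Finite_Cartesian_Product.mat 1"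
    using inj_ie by (auto simp: tr_def Finite_Cartesian_Product.vec_eq_iff ie_lt Finite_Cartesian_Product.mat_def inj_eq)
  define A where "A = mat n n (\<lambda>(i,j). M $ e i $ e j)"
  have A: "A \<in> carrier_mat n n" by (simp add: A_def)
  have trA: "tr A = M" by (simp add: tr_def A_def ie_lt e_ie Finite_Cartesian_Product.vec_eq_iff)
  define vv where "vv = vec n (\<lambda>i. v $ e i)"
  have "eigenvector A vv lam"
    unfolding eigenvector_def
  proof (intro conjI)
    show "vv \<in> carrier_vec (dim_row A)" using A by (simp add: vv_def)
    obtain a where "v $ a \<noteq> 0" using v0 by (auto simp: Finite_Cartesian_Product.vec_eq_iff)
    then show "vv \<noteq> 0\<^sub>v (dim_row A)" using A ie_lt[of a]
      by (auto simp: vv_def e_ie Finite_Cartesian_Product.vec_eq_iff Matrix.vec_eq_iff)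
    show "A *\<^sub>v vv = lam \<cdot>\<^sub>v vv"
    proof (rule eq_vecI)
      fix i assume "i < dim_vec (lam \<cdot>\<^sub>v vv)"
      then have i: "i < n" by (simp add: vv_def)
      have "(A *\<^sub>v vv) $ i = (\<Sum>k = 0..<n. M $ e i $ e k * v $ e k)"
        using i by (simp add: A_def vv_def scalar_prod_def)
      also have "\<dots> = (\<Sum>c\<in>UNIV. M $ e i $ c * v $ c)"
        using sum.reindex_bij_betw[OF e, of "\<lambda>c. M $ e i $ c * v $ c"] by simp
      also have "\<dots> = (M *v v) $ e i" by (simp add: matrix_vector_mult_def)
      also have "\<dots> = lam * v $ e i" using ev by simp
      finally show "(A *\<^sub>v vv) $ i = (lam \<cdot>\<^sub>v vv) $ i" using i by (simp add: vv_def)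
    qed (use A in \<open>simp add: vv_def\<close>)
  qed
  then have "eigenvalue A lam" unfolding eigenvalue_def by blast
  then have root: "poly (char_poly A) lam = 0" using eigenvalue_root_char_poly[OF A] by simp
  obtain as where cp: "char_poly A = (\<Prod>a\<leftarrow>as. [:- a, 1:])" and las: "length as = n"
    using char_poly_factorized[OF A] by blast
  have lam_as: "lam \<in> set as" using root unfolding cp poly_prod_list_zero_iff by auto
  define R where "R = Re ` set as"
  have "finite R" by (simp add: R_def)
  have "infinite {0..<Re lam}" using lpos by (simp add: infinite_Ico)
  then have "{0..<Re lam} - R \<noteq> {}" using \<open>finite R\<close>
    by (metis Diff_eq_empty_iff finite_subset)
  then obtain \<beta> where "\<beta> \<in> {0..<Re lam} - R" by blast
  then have b0: "0 \<le> \<beta>" "\<beta> < Re lam" "\<beta> \<notin> R" by auto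
  define \<epsilon> where "\<epsilon> = Min ((\<lambda>a. \<bar>Re a - \<beta>\<bar>) ` set as)"
  have "as \<noteq> []" using lam_as by auto
  have eps: "\<epsilon> > 0" unfolding \<epsilon>_def using \<open>as \<noteq> []\<close> b0(3)
    by (subst Min_gr_iff) (auto simp: R_def)
  have eps_le: "\<epsilon> \<le> \<bar>Re a - \<beta>\<bar>" if "a \<in> set as" for a
    unfolding \<epsilon>_def using that by (intro Min_le) auto
  define es where "es = filter (\<lambda>a. Re a > \<beta>) as @ filter (\<lambda>a. \<not> Re a > \<beta>) as"
  define k where "k = length (filter (\<lambda>a. Re a > \<beta>) as)"
  have mes: "mset es = mset as" unfolding es_def
    by (simp add: multiset_partition[symmetric])
  have les: "length es = n" using las by (simp add: es_def sum_length_filter_compl)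
  have pl: "prod_list (map f xs) = prod_mset (image_mset f (mset xs))" for f :: "complex \<Rightarrow> complex poly" and xs
    by (induction xs) auto
  have cp2: "char_poly A = (\<Prod>a\<leftarrow>es. [:- a, 1:])" unfolding cp pl mes ..
  have es_u: "Re (es ! i) \<ge> \<beta> + \<epsilon>" if "i < k" for i
  proof -
    have "es ! i = filter (\<lambda>a. Re a > \<beta>) as ! i" using that by (simp add: es_def k_def nth_append)
    moreover have "filter (\<lambda>a. Re a > \<beta>) as ! i \<in> set (filter (\<lambda>a. Re a > \<beta>) as)"
      using that k_def by (intro nth_mem) simp
    ultimately have "es ! i \<in> set as \<and> Re (es ! i) > \<beta>" by (simp only: set_filter mem_Collect_eq simp_thms)
    then have "es ! i \<in> set as" "Re (es ! i) > \<beta>" by auto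
    then show ?thesis using eps_le[of "es ! i"] by simp
  qed
  have es_s: "Re (es ! i) \<le> \<beta> - \<epsilon>" if "k \<le> i" "i < n" for i
  proof -
    have "es ! i = filter (\<lambda>a. \<not> Re a > \<beta>) as ! (i - k)" using that by (simp add: es_def k_def nth_append)
    moreover have "i - k < length (filter (\<lambda>a. \<not> Re a > \<beta>) as)"
      using that les by (simp add: es_def k_def)
    then have "filter (\<lambda>a. \<not> Re a > \<beta>) as ! (i - k) \<in> set (filter (\<lambda>a. \<not> Re a > \<beta>) as)"
      by (intro nth_mem)
    ultimately have "es ! i \<in> set as \<and> \<not> Re (es ! i) > \<beta>" by (simp only: set_filter mem_Collect_eq simp_thms)
    then have "es ! i \<in> set as" "Re (es ! i) \<le> \<beta>" by auto
    moreover have "Re (es ! i) \<noteq> \<beta>" using b0(3) \<open>es ! i \<in> set as\<close> by (auto simp: R_def)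
    ultimately show ?thesis using eps_le[of "es ! i"] by simp
  qed
  have k0: "0 < k" using lam_as b0(2) unfolding k_def by (auto simp: length_greater_0_conv filter_empty_conv)
  obtain B P Q where sd: "schur_decomposition A es = (B,P,Q)" by (cases "schur_decomposition A es") auto
  from schur_decomposition[OF A cp2 sd] have sw: "similar_mat_wit A B P Q" and ut: "upper_triangular B"
    and dg: "diag_mat B = es" by auto
  have car: "B \<in> carrier_mat n n" "P \<in> carrier_mat n n" "Q \<in> carrier_mat n n"
    and PQ: "P * Q = 1\<^sub>m n" and QP: "Q * P = 1\<^sub>m n" and APBQ: "A = P * B * Q"
    using sw A unfolding similar_mat_wit_def Let_def by auto
  have Bdiag: "B $$ (i,i) = es ! i" if "i < n" for i
  proof -
    have "es ! i = diag_mat B ! i" using dg by simp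
    also have "\<dots> = B $$ (i,i)" using that car(1) by (simp add: diag_mat_def)
    finally show ?thesis by simp
  qed
  show ?thesis
  proof (intro exI conjI)
    show "0 \<le> \<beta>" "0 < \<epsilon>" by fact+
    show "inj ie" by fact
    show "\<forall>a. ie a < CARD('n)" using ie_lt n_def by simp
    show "tr P ** tr Q = Finite_Cartesian_Product.mat 1" using tr_mult[OF car(2,3)] PQ tr_one by simp
    show "tr Q ** tr P = Finite_Cartesian_Product.mat 1" using tr_mult[OF car(3,2)] QP tr_one by simp
    show "M = tr P ** tr B ** tr Q"
    proof -
      have "P * B \<in> carrier_mat n n" using car by simp
      then have "tr A = tr (P * B) ** tr Q" using APBQ tr_mult car(3) by simp
      also have "tr (P * B) = tr P ** tr B" using tr_mult car(1,2) by simp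
      finally show ?thesis using trA by simp
    qed
    show "\<forall>a b. ie b < ie a \<longrightarrow> tr B $ a $ b = 0"
      using ut car(1) ie_lt unfolding upper_triangular_def tr_def by auto
    show "\<forall>a. ie a < k \<longrightarrow> \<beta> + \<epsilon> \<le> Re (tr B $ a $ a)"
      using es_u Bdiag ie_lt by (simp add: tr_def)
    show "\<forall>a. \<not> ie a < k \<longrightarrow> Re (tr B $ a $ a) \<le> \<beta> - \<epsilon>"
      using es_s Bdiag ie_lt by (simp add: tr_def)
    show "ie (e 0) = 0" using ie_e[of 0] by (simp add: n_def)
    show "0 < k" by fact
  qed
qed

lemma lin_final:
  fixes M :: "complex^'n^'n" and lam :: complex and v :: "complex^'n"
  assumes Mreal: "\<And>i j. cnj (M$i$j) = M$i$j"
    and v0: "v \<noteq> 0" and ev: "M *v v = lam *s v" and lpos: "Re lam > 0"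
  shows "\<exists>\<beta> \<epsilon>. 0 \<le> \<beta> \<and> 0 < \<epsilon> \<and> (\<forall>\<delta>>0. \<exists>P Q T :: complex^'n^'n. \<exists>\<sigma>. \<exists>w::real^'n.
     P ** Q = Finite_Cartesian_Product.mat 1 \<and> Q ** M = T ** Q \<and>
     (\<forall>i. \<sigma> i \<longrightarrow> \<beta> + \<epsilon> \<le> Re (T$i$i)) \<and> (\<forall>i. \<not> \<sigma> i \<longrightarrow> Re (T$i$i) \<le> \<beta> - \<epsilon>) \<and>
     (\<forall>i j. i \<noteq> j \<longrightarrow> cmod (T$i$j) \<le> \<delta>) \<and>
     (\<forall>i. \<not> \<sigma> i \<longrightarrow> (Q *v (\<chi> j. complex_of_real (w$j)))$i = 0) \<and>
     (\<exists>i. \<sigma> i \<and> (Q *v (\<chi> j. complex_of_real (w$j)))$i \<noteq> 0))"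
proof -
  obtain \<beta> \<epsilon> Pn Qn Bn and ie :: "'n \<Rightarrow> nat" and k where
    b: "0 \<le> \<beta>" and eps: "0 < \<epsilon>" and inj: "inj ie" and
    PQ: "Pn ** Qn = Finite_Cartesian_Product.mat 1" and QP: "Qn ** Pn = Finite_Cartesian_Product.mat 1"
    and MPBQ: "M = Pn ** Bn ** Qn" and ut: "\<And>a b. ie b < ie a \<Longrightarrow> Bn$a$b = 0"
    and du: "\<And>a. ie a < k \<Longrightarrow> Re (Bn$a$a) \<ge> \<beta> + \<epsilon>"
    and ds: "\<And>a. \<not> ie a < k \<Longrightarrow> Re (Bn$a$a) \<le> \<beta> - \<epsilon>"
    and a0ex: "\<exists>a. ie a = 0" and k0: "0 < k"
    using jnf_part[OF v0 ev lpos] by blast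
  obtain a0 where a0: "ie a0 = 0" using a0ex by blast
  have QM: "Qn ** M = Bn ** Qn"
    by (simp add: MPBQ matrix_mul_assoc QP)
  define E where "E = Pn *v axis a0 1"
  define \<mu> where "\<mu> = Bn$a0$a0"
  have col: "Bn *v axis a0 1 = \<mu> *s axis a0 1"
  proof -
    have "Bn $ i $ a0 = 0" if "i \<noteq> a0" for i
    proof -
      have "ie i \<noteq> 0" using a0 inj that by (metis injD)
      then show ?thesis using ut[of a0 i] a0 by simp
    qed
    then show ?thesis
      by (auto simp: Finite_Cartesian_Product.vec_eq_iff matrix_vector_mult_def axis_def \<mu>_def
          if_distrib[of "\<lambda>x. _ * x"] cong: if_cong)
  qed
  have smul: "X *v (c *s x) = c *s (X *v x)" for X :: "complex^'n^'n" and c x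
    by (simp add: Finite_Cartesian_Product.vec_eq_iff matrix_vector_mult_def sum_distrib_left mult.left_commute)
  have ME: "M *v E = \<mu> *s E"
  proof -
    have "M *v E = Pn *v (Bn *v ((Qn ** Pn) *v axis a0 1))"
      by (simp add: E_def MPBQ matrix_vector_mul_assoc matrix_mul_assoc)
    also have "\<dots> = \<mu> *s E" by (simp add: QP col smul E_def)
    finally show ?thesis .
  qed
  define cE where "cE = (\<chi> i. cnj (E$i))"
  have McE: "M *v cE = cnj \<mu> *s cE"
  proof -
    have "(M *v cE) $ i = cnj ((M *v E) $ i)" for i
      by (simp add: matrix_vector_mult_def cE_def cnj_sum Mreal)
    then show ?thesis using ME by (simp add: Finite_Cartesian_Product.vec_eq_iff cE_def)
  qed
  define z where "z = Qn *v cE"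
  have Bz: "Bn *v z = cnj \<mu> *s z"
  proof -
    have "Bn *v z = (Qn ** M) *v cE" by (simp add: z_def QM matrix_vector_mul_assoc)
    also have "\<dots> = cnj \<mu> *s z" by (simp add: matrix_vector_mul_assoc[symmetric] McE smul z_def)
    finally show ?thesis .
  qed
  have Rmu: "Re \<mu> \<ge> \<beta> + \<epsilon>" using du[of a0] a0 k0 by (simp add: \<mu>_def)
  have zs: "z $ i = 0" if "\<not> ie i < k" for i
  proof (rule ccontr)
    assume zi: "z $ i \<noteq> 0"
    define Z where "Z = {j. z $ j \<noteq> 0}"
    have "finite (ie ` Z)" by simp
    have "i \<in> Z" using zi by (simp add: Z_def)
    define m where "m = Max (ie ` Z)"
    have "m \<in> ie ` Z" unfolding m_def using \<open>i \<in> Z\<close> by (intro Max_in) auto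
    then obtain i0 where i0: "i0 \<in> Z" "ie i0 = m" by auto
    have mx: "ie j \<le> ie i0" if "j \<in> Z" for j using that i0 Max_ge[OF \<open>finite (ie ` Z)\<close>, of "ie j"] unfolding m_def by auto
    have "(Bn *v z) $ i0 = (\<Sum>j\<in>UNIV. Bn$i0$j * z$j)" by (simp add: matrix_vector_mult_def)
    also have "\<dots> = (\<Sum>j\<in>UNIV. if j = i0 then Bn$i0$i0 * z$i0 else 0)"
    proof (rule sum.cong)
      fix j :: 'n
      show "Bn $ i0 $ j * z $ j = (if j = i0 then Bn $ i0 $ i0 * z $ i0 else 0)"
      proof (cases "j = i0")
        case False
        then have "ie j \<noteq> ie i0" using inj by (metis injD)
        then consider "ie j < ie i0" | "ie j > ie i0" by linarith
        then show ?thesis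
        proof cases
          case 1 then show ?thesis using ut[of j i0] False by simp
        next
          case 2 then have "j \<notin> Z" using mx by force
          then show ?thesis using False by (simp add: Z_def)
        qed
      qed simp
    qed simp
    also have "\<dots> = Bn$i0$i0 * z$i0" by simp
    finally have "Bn$i0$i0 * z$i0 = cnj \<mu> * z$i0" using Bz by (metis vector_smult_component)
    then have "Bn$i0$i0 = cnj \<mu>" using i0(1) by (simp add: Z_def)
    then have "Re (Bn$i0$i0) \<ge> \<beta> + \<epsilon>" using Rmu by simp
    then have "ie i0 < k" using ds[of i0] eps by force
    moreover have "ie i \<le> ie i0" using mx \<open>i \<in> Z\<close> by blast
    ultimately show False using that by simp
  qed
  have QE: "Qn *v E = axis a0 1" by (simp add: E_def matrix_vector_mul_assoc QP)
  define w1 :: "real^'n" where "w1 = (\<chi> i. Re (E$i))"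
  define w2 :: "real^'n" where "w2 = (\<chi> i. Im (E$i))"
  have cw1: "(\<chi> j. complex_of_real (w1$j)) = (1/2) *s (E + cE)"
    by (simp add: Finite_Cartesian_Product.vec_eq_iff w1_def cE_def complex_eq_iff)
  have cw2: "(\<chi> j. complex_of_real (w2$j)) = (1/(2*\<i>)) *s (E - cE)"
    by (simp add: Finite_Cartesian_Product.vec_eq_iff w2_def cE_def complex_eq_iff)
  have add: "X *v (x + y) = X *v x + X *v y" for X :: "complex^'n^'n" and x y
    by (simp add: matrix_vector_right_distrib)
  have sub: "X *v (x - y) = X *v x - X *v y" for X :: "complex^'n^'n" and x y
    by (simp add: Finite_Cartesian_Product.vec_eq_iff matrix_vector_mult_def sum_subtractf right_diff_distrib)
  have Q1: "Qn *v (\<chi> j. complex_of_real (w1$j)) = (1/2) *s (axis a0 1 + z)"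
    unfolding cw1 smul add QE z_def ..
  have Q2: "Qn *v (\<chi> j. complex_of_real (w2$j)) = (1/(2*\<i>)) *s (axis a0 1 - z)"
    unfolding cw2 smul sub QE z_def ..
  have a0k: "ie a0 < k" using a0 k0 by simp
  obtain w :: "real^'n" where wz: "\<And>i. \<not> ie i < k \<Longrightarrow> (Qn *v (\<chi> j. complex_of_real (w$j)))$i = 0"
    and wa0: "(Qn *v (\<chi> j. complex_of_real (w$j)))$a0 \<noteq> 0"
  proof (cases "z $ a0 = 1")
    case True
    show ?thesis
    proof (rule that[of w1])
      fix i assume "\<not> ie i < k"
      then show "(Qn *v (\<chi> j. complex_of_real (w1$j)))$i = 0" using zs a0k
        by (auto simp: Q1 axis_def)
    next
      show "(Qn *v (\<chi> j. complex_of_real (w1$j)))$a0 \<noteq> 0" using True by (simp add: Q1 axis_def)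
    qed
  next
    case False
    show ?thesis
    proof (rule that[of w2])
      fix i assume "\<not> ie i < k"
      then show "(Qn *v (\<chi> j. complex_of_real (w2$j)))$i = 0" using zs a0k
        by (auto simp: Q2 axis_def)
    next
      show "(Qn *v (\<chi> j. complex_of_real (w2$j)))$a0 \<noteq> 0" using False by (simp add: Q2 axis_def)
    qed
  qed
  show ?thesis
  proof (rule exI[of _ \<beta>], rule exI[of _ \<epsilon>], intro conjI allI impI)
    show "0 \<le> \<beta>" "0 < \<epsilon>" by fact+
    fix \<delta> :: real assume \<delta>: "\<delta> > 0"
    define Mb where "Mb = (\<Sum>a\<in>UNIV. \<Sum>b\<in>UNIV. cmod (Bn$a$b))"
    have Mb: "cmod (Bn$a$b) \<le> Mb" for a b
    proof -
      have "cmod (Bn$a$b) \<le> (\<Sum>b\<in>UNIV. cmod (Bn$a$b))" by (rule member_le_sum) auto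
      also have "\<dots> \<le> Mb" unfolding Mb_def by (rule member_le_sum[of a]) (auto intro: sum_nonneg)
      finally show ?thesis .
    qed
    have Mb0: "Mb \<ge> 0" unfolding Mb_def by (intro sum_nonneg) auto
    define d where "d = min 1 (\<delta> / (Mb + 1))"
    have d0: "d > 0" "d \<le> 1" using \<delta> Mb0 by (auto simp: d_def)
    have dMb: "Mb * d \<le> \<delta>"
    proof -
      have "Mb * d \<le> Mb * (\<delta> / (Mb + 1))" using Mb0 by (intro mult_left_mono) (auto simp: d_def)
      also have "\<dots> \<le> \<delta>" using Mb0 \<delta> by (simp add: field_simps)
      finally show ?thesis .
    qed
    define cd where "cd = complex_of_real d"
    have cd0: "cd \<noteq> 0" using d0 by (simp add: cd_def)
    define D :: "complex^'n^'n" where "D = (\<chi> a b. if a = b then cd ^ ie a else 0)"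
    define Di :: "complex^'n^'n" where "Di = (\<chi> a b. if a = b then 1 / cd ^ ie a else 0)"
    have DDi: "D ** Di = Finite_Cartesian_Product.mat 1"
      using cd0 by (simp add: D_def Di_def matrix_matrix_mult_def Finite_Cartesian_Product.mat_def
          Finite_Cartesian_Product.vec_eq_iff if_distrib[of "\<lambda>x. x * _"] cong: if_cong)
    have Dv: "(Di *v x) $ i = x $ i / cd ^ ie i" for x i
      by (simp add: Di_def matrix_vector_mult_def if_distrib[of "\<lambda>x. x * _"] cong: if_cong)
    define P where "P = Pn ** D"
    define Q where "Q = Di ** Qn"
    define T where "T = Di ** Bn ** D"
    have Tij: "T $ a $ b = Bn $ a $ b * cd ^ ie b / cd ^ ie a" for a b
      by (simp add: T_def D_def Di_def matrix_matrix_mult_def if_distrib[of "\<lambda>x. x * _"]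
          if_distrib[of "\<lambda>x. _ * x"] cong: if_cong)
    show "\<exists>P Q T :: complex^'n^'n. \<exists>\<sigma>. \<exists>w::real^'n.
     P ** Q = Finite_Cartesian_Product.mat 1 \<and> Q ** M = T ** Q \<and>
     (\<forall>i. \<sigma> i \<longrightarrow> \<beta> + \<epsilon> \<le> Re (T$i$i)) \<and> (\<forall>i. \<not> \<sigma> i \<longrightarrow> Re (T$i$i) \<le> \<beta> - \<epsilon>) \<and>
     (\<forall>i j. i \<noteq> j \<longrightarrow> cmod (T$i$j) \<le> \<delta>) \<and>
     (\<forall>i. \<not> \<sigma> i \<longrightarrow> (Q *v (\<chi> j. complex_of_real (w$j)))$i = 0) \<and>
     (\<exists>i. \<sigma> i \<and> (Q *v (\<chi> j. complex_of_real (w$j)))$i \<noteq> 0)"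
    proof (rule exI[of _ P], rule exI[of _ Q], rule exI[of _ T], rule exI[of _ "\<lambda>i. ie i < k"], rule exI[of _ w], intro conjI allI impI)
      show "P ** Q = Finite_Cartesian_Product.mat 1"
        unfolding P_def Q_def by (simp add: matrix_mul_assoc[symmetric] PQ
            matrix_mul_assoc[of D Di Qn] DDi)
      show "Q ** M = T ** Q"
      proof -
        have "Q ** M = Di ** (Bn ** Qn)" unfolding Q_def by (simp add: matrix_mul_assoc[symmetric] QM)
        also have "\<dots> = Di ** (Bn ** ((D ** Di) ** Qn))" by (simp add: DDi)
        also have "\<dots> = T ** Q" by (simp add: T_def Q_def matrix_mul_assoc)
        finally show ?thesis .
      qed
      fix i
      show "ie i < k \<Longrightarrow> \<beta> + \<epsilon> \<le> Re (T$i$i)" using du cd0 by (simp add: Tij)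
      show "\<not> ie i < k \<Longrightarrow> Re (T$i$i) \<le> \<beta> - \<epsilon>" using ds cd0 by (simp add: Tij)
      show "\<not> ie i < k \<Longrightarrow> (Q *v (\<chi> j. complex_of_real (w$j)))$i = 0"
        using wz[of i] by (simp add: Q_def matrix_vector_mul_assoc[symmetric] Dv)
      fix j assume ij: "i \<noteq> j"
      show "cmod (T$i$j) \<le> \<delta>"
      proof (cases "ie j < ie i")
        case True then show ?thesis using ut[of j i] \<delta> by (simp add: Tij)
      next
        case False
        then have lt: "ie i < ie j" using ij inj by (metis injD linorder_neqE_nat)
        have "cd ^ ie j / cd ^ ie i = cd ^ (ie j - ie i)" using lt cd0 by (simp add: power_diff)
        then have "T$i$j = Bn$i$j * cd ^ (ie j - ie i)" by (simp add: Tij times_divide_eq_right[symmetric])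
        then have "cmod (T$i$j) = cmod (Bn$i$j) * d ^ (ie j - ie i)"
          using d0 by (simp add: norm_mult norm_power cd_def)
        also have "\<dots> \<le> Mb * d"
        proof (rule mult_mono[OF Mb])
          have "d ^ (ie j - ie i) \<le> d ^ 1" using d0 lt by (intro power_decreasing) auto
          then show "d ^ (ie j - ie i) \<le> d" by simp
        qed (use Mb0 d0 in auto)
        also have "\<dots> \<le> \<delta>" by (rule dMb)
        finally show ?thesis .
      qed
    next
      show "\<exists>i. ie i < k \<and> (Q *v (\<chi> j. complex_of_real (w$j)))$i \<noteq> 0"
        using wa0 a0k cd0 by (intro exI[of _ a0]) (simp add: Q_def matrix_vector_mul_assoc[symmetric] Dv)
    qed
  qed
qed

lemma small_lemma:
  fixes \<epsilon> N C \<delta> \<eta> :: real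
  assumes N1: "N \<ge> 1" and C0: "C \<ge> 0" and eps: "\<epsilon> > 0" and \<delta>: "\<delta> = \<epsilon> / (4 * N)" and \<eta>: "\<eta> = \<epsilon> / (4 * N * N * (C + 1))"
  shows "(\<delta> + \<eta> * C * N) * N \<le> \<epsilon> / 2"
proof -
  have nz: "N \<noteq> 0" "C + 1 \<noteq> 0" using N1 C0 by linarith+
  have e1: "\<eta> * (4 * N * N * (C + 1)) = \<epsilon>" using nz by (simp add: \<eta>)
  have e2: "\<delta> * (4 * N) = \<epsilon>" using nz by (simp add: \<delta>)
  have h0: "\<eta> \<ge> 0" using eps N1 C0 by (simp add: \<eta>)
  have "\<eta> * C \<le> \<eta> * (C + 1)" using h0 by (intro mult_left_mono) auto
  then have "\<eta> * C * N * N \<le> \<eta> * (C + 1) * N * N" using N1 by (intro mult_right_mono) auto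
  moreover have "\<eta> * (C + 1) * N * N = \<epsilon> / 4" using e1 by (simp add: algebra_simps)
  moreover have "\<delta> * N = \<epsilon> / 4" using e2 by (simp add: algebra_simps)
  ultimately show ?thesis by (simp add: algebra_simps)
qed

lemma mvt_lemma:
  fixes f :: "real^'n \<Rightarrow> real^'n" and f' :: "real^'n \<Rightarrow> ((real^'n) \<Rightarrow>\<^sub>L (real^'n))"
  assumes der: "\<And>y. y \<in> ball x0 r \<Longrightarrow> (f has_derivative blinfun_apply (f' y)) (at y)"
    and close: "\<And>y. y \<in> ball x0 r \<Longrightarrow> norm (f' y - f' x0) \<le> \<eta>"
    and x: "x \<in> ball x0 r" and z: "z \<in> ball x0 r"
  shows "norm (f x - f z - blinfun_apply (f' x0) (x - z)) \<le> \<eta> * norm (x - z)"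
proof -
  define L where "L = blinfun_apply (f' x0)"
  have Llin: "bounded_linear L" unfolding L_def by (rule blinfun.bounded_linear_right)
  define F where "F x = f x - L x" for x
  have dF: "(F has_derivative blinfun_apply (f' y - f' x0)) (at y within ball x0 r)" if y: "y \<in> ball x0 r" for y
  proof -
    have "(f has_derivative blinfun_apply (f' y)) (at y within ball x0 r)"
      using der[OF y] by (rule has_derivative_at_withinI)
    moreover have "(L has_derivative L) (at y within ball x0 r)"
      by (rule bounded_linear_imp_has_derivative[OF Llin])
    ultimately have "((\<lambda>x. f x - L x) has_derivative (\<lambda>h. blinfun_apply (f' y) h - L h)) (at y within ball x0 r)"
      by (rule has_derivative_diff)
    moreover have "(\<lambda>h. blinfun_apply (f' y) h - L h) = blinfun_apply (f' y - f' x0)"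
      by (simp add: fun_eq_iff L_def blinfun.diff_left)
    ultimately show ?thesis by (simp add: F_def[abs_def])
  qed
  have on: "onorm (blinfun_apply (f' y - f' x0)) \<le> \<eta>" if "y \<in> ball x0 r" for y
    using close[OF that] by (simp add: norm_blinfun.rep_eq)
  have n: "norm (F x - F z) \<le> \<eta> * norm (x - z)"
    by (rule differentiable_bound[OF convex_ball dF on x z])
  have "L (x - z) = L x - L z" using Llin by (simp add: linear_diff bounded_linear.linear)
  then have e: "f x - f z - L (x - z) = F x - F z" by (simp add: F_def algebra_simps)
  show ?thesis using n e unfolding L_def by simp
qed

lemma local_negligible:
  fixes f :: "real^'n \<Rightarrow> real^'n" and U :: "(real^'n) set" and x0 :: "real^'n"
    and f' :: "real^'n \<Rightarrow> ((real^'n) \<Rightarrow>\<^sub>L (real^'n))"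
  assumes U: "open U" "x0 \<in> U"
    and der: "\<And>x. x \<in> U \<Longrightarrow> (f has_derivative blinfun_apply (f' x)) (at x)"
    and cont: "continuous_on U f'"
    and eig: "complex_eigenvalue (blinfun_apply (f' x0)) lam" and lpos: "Re lam > 0"
  shows "\<exists>r>0. ball x0 r \<subseteq> U \<and> negligible {x. \<exists>\<xi>. \<xi> 0 = x \<and>
            (\<forall>t\<ge>0. \<xi> t \<in> ball x0 r \<and> (\<xi> has_vector_derivative f (\<xi> t)) (at t within {0..}))}"
proof -
  define L where "L = blinfun_apply (f' x0)"
  have Llin: "bounded_linear L" unfolding L_def by (rule blinfun.bounded_linear_right)
  define Mc :: "complex^'n^'n" where "Mc = (\<chi> i j. complex_of_real (matrix L $ i $ j))"
  have "\<exists>v. v \<noteq> 0 \<and> Mc *v v = lam *s v"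
    using eig by (simp add: complex_eigenvalue_def L_def Mc_def matrix_vector_mult_def)
  then obtain v :: "complex^'n" where v0: "v \<noteq> 0" and ev: "Mc *v v = lam *s v" by blast
  have Mreal: "\<And>i j. cnj (Mc$i$j) = Mc$i$j" by (simp add: Mc_def)
  obtain \<beta> \<epsilon> where bH: "0 \<le> \<beta> \<and> 0 < \<epsilon> \<and> (\<forall>\<delta>>0. \<exists>P Q T :: complex^'n^'n. \<exists>\<sigma>. \<exists>w::real^'n.
     P ** Q = Finite_Cartesian_Product.mat 1 \<and> Q ** Mc = T ** Q \<and>
     (\<forall>i. \<sigma> i \<longrightarrow> \<beta> + \<epsilon> \<le> Re (T$i$i)) \<and> (\<forall>i. \<not> \<sigma> i \<longrightarrow> Re (T$i$i) \<le> \<beta> - \<epsilon>) \<and>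
     (\<forall>i j. i \<noteq> j \<longrightarrow> cmod (T$i$j) \<le> \<delta>) \<and>
     (\<forall>i. \<not> \<sigma> i \<longrightarrow> (Q *v (\<chi> j. complex_of_real (w$j)))$i = 0) \<and>
     (\<exists>i. \<sigma> i \<and> (Q *v (\<chi> j. complex_of_real (w$j)))$i \<noteq> 0))"
    using lin_final[OF Mreal v0 ev lpos] by (elim exE) (erule that)
  have b: "0 \<le> \<beta>" using bH by (rule conjunct1)
  have eps: "0 < \<epsilon>" using bH by (blast dest: conjunct2 conjunct1)
  have H: "\<forall>\<delta>>0. \<exists>P Q T :: complex^'n^'n. \<exists>\<sigma>. \<exists>w::real^'n.
     P ** Q = Finite_Cartesian_Product.mat 1 \<and> Q ** Mc = T ** Q \<and>
     (\<forall>i. \<sigma> i \<longrightarrow> \<beta> + \<epsilon> \<le> Re (T$i$i)) \<and> (\<forall>i. \<not> \<sigma> i \<longrightarrow> Re (T$i$i) \<le> \<beta> - \<epsilon>) \<and>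
     (\<forall>i j. i \<noteq> j \<longrightarrow> cmod (T$i$j) \<le> \<delta>) \<and>
     (\<forall>i. \<not> \<sigma> i \<longrightarrow> (Q *v (\<chi> j. complex_of_real (w$j)))$i = 0) \<and>
     (\<exists>i. \<sigma> i \<and> (Q *v (\<chi> j. complex_of_real (w$j)))$i \<noteq> 0)"
    using bH by (rule conjunct2[OF conjunct2])
  define N where "N = real CARD('n)"
  have N1: "N \<ge> 1" unfolding N_def by (simp add: Suc_leI)
  define \<delta> where "\<delta> = \<epsilon> / (4 * N)"
  have \<delta>0: "\<delta> > 0" using eps N1 by (simp add: \<delta>_def)
  obtain P Q T :: "complex^'n^'n" and \<sigma> and wv :: "real^'n" where
    A: "P ** Q = Finite_Cartesian_Product.mat 1 \<and> Q ** Mc = T ** Q \<and>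
     (\<forall>i. \<sigma> i \<longrightarrow> \<beta> + \<epsilon> \<le> Re (T$i$i)) \<and> (\<forall>i. \<not> \<sigma> i \<longrightarrow> Re (T$i$i) \<le> \<beta> - \<epsilon>) \<and>
     (\<forall>i j. i \<noteq> j \<longrightarrow> cmod (T$i$j) \<le> \<delta>) \<and>
     (\<forall>i. \<not> \<sigma> i \<longrightarrow> (Q *v (\<chi> j. complex_of_real (wv$j)))$i = 0) \<and>
     (\<exists>i. \<sigma> i \<and> (Q *v (\<chi> j. complex_of_real (wv$j)))$i \<noteq> 0)"
    using H[rule_format, OF \<delta>0] by (elim exE) (erule that)
  note A' = A[THEN conjunct2] A[THEN conjunct2, THEN conjunct2] A[THEN conjunct2, THEN conjunct2, THEN conjunct2]
    A[THEN conjunct2, THEN conjunct2, THEN conjunct2, THEN conjunct2]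
    A[THEN conjunct2, THEN conjunct2, THEN conjunct2, THEN conjunct2, THEN conjunct2]
  have PQ: "P ** Q = Finite_Cartesian_Product.mat 1" using A by (rule conjunct1)
  have QM: "Q ** Mc = T ** Q" using A'(1) by (rule conjunct1)
  have du: "\<And>i. \<sigma> i \<Longrightarrow> \<beta> + \<epsilon> \<le> Re (T$i$i)" using A'(2)[THEN conjunct1] by blast
  have ds: "\<And>i. \<not> \<sigma> i \<Longrightarrow> Re (T$i$i) \<le> \<beta> - \<epsilon>" using A'(3)[THEN conjunct1] by blast
  have off: "\<And>i j. i \<noteq> j \<Longrightarrow> cmod (T$i$j) \<le> \<delta>" using A'(4)[THEN conjunct1] by blast
  have wz: "\<And>i. \<not> \<sigma> i \<Longrightarrow> (Q *v (\<chi> j. complex_of_real (wv$j)))$i = 0" using A'(5)[THEN conjunct1] by blast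
  have wnz: "\<exists>i. \<sigma> i \<and> (Q *v (\<chi> j. complex_of_real (wv$j)))$i \<noteq> 0" using A'(5)[THEN conjunct2] .
  define Cq where "Cq = (\<Sum>i\<in>UNIV. \<Sum>j\<in>UNIV. cmod (Q$i$j))"
  define Cp where "Cp = (\<Sum>i\<in>UNIV. \<Sum>j\<in>UNIV. cmod (P$i$j))"
  have C0: "Cq \<ge> 0" "Cp \<ge> 0" unfolding Cq_def Cp_def by (auto intro!: sum_nonneg)
  define \<eta> where "\<eta> = \<epsilon> / (4 * N * N * (Cq * Cp + 1))"
  have \<eta>0: "\<eta> > 0" unfolding \<eta>_def using eps N1 C0
    by (intro divide_pos_pos mult_pos_pos add_nonneg_pos) auto
  have small: "(\<delta> + \<eta> * Cq * Cp * N) * N \<le> \<epsilon> / 2"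
    using small_lemma[OF N1 _ eps \<delta>_def \<eta>_def] C0 by (simp add: mult.assoc)
  have "continuous (at x0) f'" using cont U by (simp add: continuous_on_eq_continuous_at)
  then obtain r0 where r0: "r0 > 0" and r0c: "\<And>x. dist x x0 < r0 \<Longrightarrow> dist (f' x) (f' x0) < \<eta>"
    using \<eta>0 unfolding continuous_at_eps_delta by blast
  obtain r1 where r1: "r1 > 0" "ball x0 r1 \<subseteq> U" using U open_contains_ball by blast
  define r where "r = min r0 r1"
  have r: "r > 0" "ball x0 r \<subseteq> U" using r0 r1 by (auto simp: r_def)
  have close: "norm (f' x - f' x0) \<le> \<eta>" if "x \<in> ball x0 r" for x
    using r0c[of x] that by (auto simp: r_def dist_norm norm_minus_commute less_imp_le)
  have mvt: "norm (f x - f z - L (x - z)) \<le> \<eta> * norm (x - z)" if "x \<in> ball x0 r" "z \<in> ball x0 r" for x z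
    unfolding L_def
  proof (rule mvt_lemma[where f'=f' and f=f, OF _ close that(1) that(2)])
    fix y assume "y \<in> ball x0 r"
    then show "(f has_derivative blinfun_apply (f' y)) (at y)" using r(2) der by blast
  qed
  define S where "S = {x. \<exists>\<xi>. \<xi> 0 = x \<and>
            (\<forall>t\<ge>0. \<xi> t \<in> ball x0 r \<and> (\<xi> has_vector_derivative f (\<xi> t)) (at t within {0..}))}"
  define s where "s i = (if \<sigma> i then 1 else -1 :: real)" for i
  define F where "F w = (\<Sum>i\<in>UNIV. s i * (cmod ((Q *v (\<chi> j. complex_of_real ((w::real^'n)$j)))$i))^2)" for w
  have "negligible S"
  proof (rule cone_negligible[of F wv])
    have lc: "continuous_on UNIV (\<lambda>w::real^'n. (Q *v (\<chi> j. complex_of_real (w$j)))$i)" for i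
      by (rule linear_continuous_on[OF cv_lin])
    show "continuous_on UNIV F" unfolding F_def
      by (intro continuous_intros lc)
    fix t :: real and w :: "real^'n"
    have "(Q *v (\<chi> j. complex_of_real ((t *\<^sub>R w)$j)))$i = t *\<^sub>R (Q *v (\<chi> j. complex_of_real (w$j)))$i" for i
      using linear_cmul[OF bounded_linear.linear[OF cv_lin[of Q i]], of t w] by simp
    then show "F (t *\<^sub>R w) = t^2 * F w"
      unfolding F_def by (simp add: sum_distrib_left power_mult_distrib algebra_simps)
  next
    obtain i0 where i0: "\<sigma> i0" "(Q *v (\<chi> j. complex_of_real (wv$j)))$i0 \<noteq> 0" using wnz by blast
    have "F wv = (\<Sum>i\<in>UNIV. (if \<sigma> i then (cmod ((Q *v (\<chi> j. complex_of_real (wv$j)))$i))^2 else 0))"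
      unfolding F_def s_def by (intro sum.cong) (auto simp: wz)
    also have "\<dots> \<ge> (if \<sigma> i0 then (cmod ((Q *v (\<chi> j. complex_of_real (wv$j)))$i0))^2 else 0)"
      by (rule member_le_sum) auto
    finally show "F wv > 0" using i0 by (smt (verit) zero_less_power2 norm_eq_zero)
  next
    fix x z assume x: "x \<in> S" and z: "z \<in> S"
    obtain \<xi>1 where \<xi>1: "\<xi>1 0 = x" "\<And>t. t \<ge> 0 \<Longrightarrow> \<xi>1 t \<in> ball x0 r"
      "\<And>t. t \<ge> 0 \<Longrightarrow> (\<xi>1 has_vector_derivative f (\<xi>1 t)) (at t within {0..})"
      using x unfolding S_def by blast
    obtain \<xi>2 where \<xi>2: "\<xi>2 0 = z" "\<And>t. t \<ge> 0 \<Longrightarrow> \<xi>2 t \<in> ball x0 r"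
      "\<And>t. t \<ge> 0 \<Longrightarrow> (\<xi>2 has_vector_derivative f (\<xi>2 t)) (at t within {0..})"
      using z unfolding S_def by blast
    have "(\<Sum>i\<in>UNIV. (if \<sigma> i then 1 else -1) *
           (cmod ((Q *v (\<chi> j. complex_of_real ((\<xi>1 0 - \<xi>2 0)$j)))$i))^2) \<le> 0"
    proof (rule cone_growth[where P=P and L=L and T=T and \<beta>=\<beta> and \<epsilon>=\<epsilon> and \<delta>=\<delta> and \<eta>=\<eta> and f=f and R="2*r"])
      show "P ** Q = Finite_Cartesian_Product.mat 1" by (rule PQ)
      show "Q ** (\<chi> i j. complex_of_real (matrix L $ i $ j)) = T ** Q" using QM by (simp add: Mc_def)
      show "bounded_linear L" by (rule Llin)
      show "(\<delta> + \<eta> * (\<Sum>i\<in>UNIV. \<Sum>j\<in>UNIV. cmod (Q$i$j)) * (\<Sum>i\<in>UNIV. \<Sum>j\<in>UNIV. cmod (P$i$j))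
        * real CARD('n)) * real CARD('n) \<le> \<epsilon> / 2" using small by (simp add: Cq_def Cp_def N_def)
      fix t :: real assume t: "t \<ge> 0"
      show "norm (f (\<xi>1 t) - f (\<xi>2 t) - L (\<xi>1 t - \<xi>2 t)) \<le> \<eta> * norm (\<xi>1 t - \<xi>2 t)"
        by (rule mvt[OF \<xi>1(2)[OF t] \<xi>2(2)[OF t]])
      have "dist (\<xi>1 t) (\<xi>2 t) \<le> dist (\<xi>1 t) x0 + dist x0 (\<xi>2 t)" by (rule dist_triangle)
      then show "norm (\<xi>1 t - \<xi>2 t) \<le> 2 * r" using \<xi>1(2)[OF t] \<xi>2(2)[OF t]
        by (simp add: dist_norm dist_commute norm_minus_commute)
    next
      show "\<And>i. \<sigma> i \<Longrightarrow> \<beta> + \<epsilon> \<le> Re (T$i$i)" by (rule du)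
      show "\<And>i. \<not> \<sigma> i \<Longrightarrow> Re (T$i$i) \<le> \<beta> - \<epsilon>" by (rule ds)
      show "\<And>i j. i \<noteq> j \<Longrightarrow> cmod (T$i$j) \<le> \<delta>" by (rule off)
      show "\<epsilon> > 0" "\<delta> \<ge> 0" "\<eta> \<ge> 0" "\<beta> \<ge> 0" using eps \<delta>0 \<eta>0 b by auto
      show "\<And>t. t \<ge> 0 \<Longrightarrow> (\<xi>1 has_vector_derivative f (\<xi>1 t)) (at t within {0..})" by (rule \<xi>1(3))
      show "\<And>t. t \<ge> 0 \<Longrightarrow> (\<xi>2 has_vector_derivative f (\<xi>2 t)) (at t within {0..})" by (rule \<xi>2(3))
    qed
    then show "F (x - z) \<le> 0" using \<xi>1(1) \<xi>2(1) by (simp add: F_def s_def)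
  qed
  then show ?thesis using r unfolding S_def by blast
qed

lemma smooth_diff_on:
  assumes "smooth_on S g" "T \<subseteq> S"
  shows "g differentiable_on T"
proof (rule differentiable_at_imp_differentiable_on)
  fix x assume "x \<in> T"
  then have "iter_dd g [] differentiable (at x)" using assms unfolding smooth_on_def by blast
  then show "g differentiable at x" by simp
qed

theorem lemmaA6:
  fixes M :: "'p topology" and A :: "('p, 'n::finite) chart set"
    and X :: "('p, 'n) chart \<Rightarrow> real^'n \<Rightarrow> real^'n" and p0 :: 'p
  assumes "smooth_manifold M A"
    and "C1_vector_field M A X"
    and "p0 \<in> topspace M"
    and "\<forall>c. mchart M A c \<longrightarrow> p0 \<in> fst c \<longrightarrow> X c (snd c p0) = 0"
    and "\<exists>c lam. mchart M A c \<and> p0 \<in> fst c \<and> Re lam > 0 \<and>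
           complex_eigenvalue (frechet_derivative (X c) (at (snd c p0))) lam"
  shows "\<exists>B. openin M B \<and> p0 \<in> B \<and>
           measure_zero M A {p \<in> topspace M. \<exists>\<gamma>. integral_curve M A X \<gamma> {0..} \<and>
              \<gamma> 0 = p \<and> (\<forall>t\<ge>0. \<gamma> t \<in> B)}"
proof -
  have smA: "\<And>a. a \<in> A \<Longrightarrow> is_chart M a" using assms(1) by (simp add: smooth_manifold_def)
  have cover: "topspace M \<subseteq> (\<Union>c\<in>A. fst c)" using assms(1) by (simp add: smooth_manifold_def)
  obtain c lam where c: "mchart M A c" "p0 \<in> fst c" and lpos: "Re lam > 0"
    and eig: "complex_eigenvalue (frechet_derivative (X c) (at (snd c p0))) lam"
    using assms(5) by blast
  obtain a0 where a0: "a0 \<in> A" "p0 \<in> fst a0" using cover assms(3) by blast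
  define V where "V = fst c"
  define \<psi> where "\<psi> = snd c"
  define U where "U = \<psi> ` V"
  have chc: "is_chart M c" using c(1) unfolding mchart_def by blast
  have Vopen: "openin M V" and Uopen: "open U"
    and hom: "homeomorphic_map (subtopology M V) (top_of_set U) \<psi>"
    using chc unfolding is_chart_def V_def \<psi>_def U_def by auto
  have VM: "V \<subseteq> topspace M" using Vopen by (rule openin_subset)
  have injc: "inj_on \<psi> V" using homeomorphic_imp_injective_map[OF hom] VM
    by (simp add: Int_absorb1)
  define x0 where "x0 = \<psi> p0"
  have x0U: "x0 \<in> U" using c(2) by (simp add: x0_def U_def V_def)
  have "C1_on U (X c)" using assms(2)[unfolded C1_vector_field_def, THEN conjunct1] c(1)
    unfolding U_def V_def \<psi>_def by blast
  then obtain f' where der: "\<And>x. x \<in> U \<Longrightarrow> (X c has_derivative blinfun_apply (f' x)) (at x)"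
    and cont: "continuous_on U f'"
    unfolding C1_on_def by blast
  have "frechet_derivative (X c) (at x0) = blinfun_apply (f' x0)"
    using frechet_derivative_at[OF der[OF x0U]] by simp
  then have eig': "complex_eigenvalue (blinfun_apply (f' x0)) lam" using eig by (simp add: x0_def \<psi>_def)
  obtain r where r: "r > 0" "ball x0 r \<subseteq> U"
    and neg: "negligible {x. \<exists>\<xi>. \<xi> 0 = x \<and>
            (\<forall>t\<ge>0. \<xi> t \<in> ball x0 r \<and> (\<xi> has_vector_derivative X c (\<xi> t)) (at t within {0..}))}"
    using local_negligible[OF Uopen x0U der cont eig' lpos] by blast
  define B where "B = {p \<in> V \<inter> fst a0. \<psi> p \<in> ball x0 r}"
  have cha0: "is_chart M a0" using smA a0(1) by blast
  have a0open: "openin M (fst a0)" using cha0 unfolding is_chart_def by blast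
  have "openin (subtopology M V) {p \<in> topspace (subtopology M V). \<psi> p \<in> U \<inter> ball x0 r}"
    using homeomorphic_imp_continuous_map[OF hom] unfolding continuous_map_def
    by (meson Uopen open_Int open_ball openin_open_Int)
  moreover have "{p \<in> topspace (subtopology M V). \<psi> p \<in> U \<inter> ball x0 r} = {p \<in> V. \<psi> p \<in> ball x0 r}"
    using VM r(2) by (auto simp: U_def)
  ultimately have "openin M {p \<in> V. \<psi> p \<in> ball x0 r}"
    using openin_open_subtopology[OF Vopen] by simp
  moreover have "B = {p \<in> V. \<psi> p \<in> ball x0 r} \<inter> fst a0" unfolding B_def by auto
  ultimately have Bopen: "openin M B" using openin_Int[OF _ a0open] by simp
  have p0B: "p0 \<in> B" using c(2) a0(2) r(1) by (simp add: B_def V_def x0_def)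
  define E where "E = {p \<in> topspace M. \<exists>\<gamma>. integral_curve M A X \<gamma> {0..} \<and>
              \<gamma> 0 = p \<and> (\<forall>t\<ge>0. \<gamma> t \<in> B)}"
  have Emem: "p \<in> E \<longleftrightarrow> p \<in> topspace M \<and> (\<exists>\<gamma>. integral_curve M A X \<gamma> {0..} \<and>
              \<gamma> 0 = p \<and> (\<forall>t\<ge>0. \<gamma> t \<in> B))" for p
    unfolding E_def by (rule mem_Collect_eq)
  have EB: "E \<subseteq> B"
  proof
    fix p assume "p \<in> E"
    then obtain \<gamma> :: "real \<Rightarrow> 'p" where g: "\<gamma> 0 = p" "\<forall>t\<ge>0. \<gamma> t \<in> B" unfolding Emem by blast
    have "\<gamma> 0 \<in> B" using g(2)[rule_format, of 0] by simp
    then show "p \<in> B" using g(1) by simp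
  qed
  have negE: "negligible (\<psi> ` E)"
  proof (rule negligible_subset[OF neg])
    show "\<psi> ` E \<subseteq> {x. \<exists>\<xi>. \<xi> 0 = x \<and>
            (\<forall>t\<ge>0. \<xi> t \<in> ball x0 r \<and> (\<xi> has_vector_derivative X c (\<xi> t)) (at t within {0..}))}"
    proof
      fix x assume "x \<in> \<psi> ` E"
      then obtain p where p: "p \<in> E" "x = \<psi> p" by (rule imageE)
      then obtain \<gamma> :: "real \<Rightarrow> 'p" where ic: "integral_curve M A X \<gamma> {0..}" and g0: "\<gamma> 0 = p" and gB: "\<forall>t\<ge>0. \<gamma> t \<in> B"
        unfolding Emem by blast
      have "(\<psi> \<circ> \<gamma>) 0 = x \<and> (\<forall>t\<ge>0. (\<psi> \<circ> \<gamma>) t \<in> ball x0 r \<and>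
          ((\<psi> \<circ> \<gamma>) has_vector_derivative X c ((\<psi> \<circ> \<gamma>) t)) (at t within {0..}))"
      proof (intro conjI allI impI)
        show "(\<psi> \<circ> \<gamma>) 0 = x" using g0 p by simp
        fix t :: real assume t: "t \<ge> 0"
        show "(\<psi> \<circ> \<gamma>) t \<in> ball x0 r" using gB t by (simp add: B_def)
        have gt: "\<gamma> t \<in> fst c" using gB t by (simp add: B_def V_def)
        have icd: "\<forall>c. mchart M A c \<longrightarrow> (\<forall>t\<in>{0..}. \<gamma> t \<in> fst c \<longrightarrow>
          ((snd c \<circ> \<gamma>) has_vector_derivative X c (snd c (\<gamma> t))) (at t within {0..}))"
          using ic unfolding integral_curve_def by (rule conjunct2)
        have "((snd c \<circ> \<gamma>) has_vector_derivative X c (snd c (\<gamma> t))) (at t within {0..})"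
          using icd c(1) t gt by blast
        then show "((\<psi> \<circ> \<gamma>) has_vector_derivative X c ((\<psi> \<circ> \<gamma>) t)) (at t within {0..})"
          by (simp add: \<psi>_def)
      qed
      then show "x \<in> {x. \<exists>\<xi>. \<xi> 0 = x \<and>
            (\<forall>t\<ge>0. \<xi> t \<in> ball x0 r \<and> (\<xi> has_vector_derivative X c (\<xi> t)) (at t within {0..}))}"
        by (intro CollectI exI[of _ "\<psi> \<circ> \<gamma>"])
    qed
  qed
  have inj_a0: "inj_on (snd a0) (fst a0)"
  proof -
    have "homeomorphic_map (subtopology M (fst a0)) (top_of_set (snd a0 ` fst a0)) (snd a0)"
      using cha0 unfolding is_chart_def by blast
    from homeomorphic_imp_injective_map[OF this] show ?thesis
      using openin_subset[OF a0open] by (simp add: Int_absorb1)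
  qed
  have EV: "E \<subseteq> V" "E \<subseteq> fst a0" using EB by (auto simp: B_def)
  have sc_a0c: "smooth_compat a0 c" using c(1) a0(1) unfolding mchart_def by blast
  have "negligible (transition c a0 ` (\<psi> ` E))"
  proof (rule negligible_differentiable_image_negligible[OF order_refl negE])
    have "smooth_on (snd c ` (fst a0 \<inter> fst c)) (transition c a0)"
      using sc_a0c unfolding smooth_compat_def by blast
    then show "transition c a0 differentiable_on \<psi> ` E"
      by (rule smooth_diff_on) (use EV in \<open>auto simp: \<psi>_def V_def\<close>)
  qed
  moreover have "transition c a0 ` (\<psi> ` E) = snd a0 ` E"
  proof -
    have "transition c a0 (\<psi> p) = snd a0 p" if "p \<in> E" for p
    proof -
      have "p \<in> V" using that EV by blast
      then show ?thesis using inv_into_f_f[OF injc] by (simp add: transition_def \<psi>_def V_def)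
    qed
    then show ?thesis by (auto simp: image_iff)
  qed
  ultimately have negE0: "negligible (snd a0 ` E)" by simp
  have "measure_zero M A E"
    unfolding measure_zero_def
  proof (intro allI impI)
    fix c' :: "('p, 'n) chart" assume c': "mchart M A c'"
    have sc: "smooth_compat a0 c'" using c' a0(1) unfolding mchart_def by blast
    have chc': "is_chart M c'" using c' unfolding mchart_def by blast
    have "negligible (transition a0 c' ` (snd a0 ` (E \<inter> fst c')))"
    proof (rule negligible_differentiable_image_negligible[OF order_refl])
      show "negligible (snd a0 ` (E \<inter> fst c'))" using negE0 by (rule negligible_subset) auto
      have "smooth_on (snd a0 ` (fst a0 \<inter> fst c')) (transition a0 c')"
        using sc unfolding smooth_compat_def by blast
      then show "transition a0 c' differentiable_on snd a0 ` (E \<inter> fst c')"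
        by (rule smooth_diff_on) (use EV in auto)
    qed
    moreover have "transition a0 c' ` (snd a0 ` (E \<inter> fst c')) = snd c' ` (E \<inter> fst c')"
    proof -
      have "transition a0 c' (snd a0 p) = snd c' p" if "p \<in> E" for p
      proof -
        have "p \<in> fst a0" using that EV by blast
        then show ?thesis using inv_into_f_f[OF inj_a0] by (simp add: transition_def)
      qed
      then show ?thesis by (auto simp: image_iff)
    qed
    ultimately show "snd c' ` (E \<inter> fst c') \<in> null_sets lebesgue"
      by (simp add: negligible_iff_null_sets)
  qed
  then show ?thesis
  proof (intro exI[of _ B] conjI)
    show "openin M B" by (rule Bopen)
    show "p0 \<in> B" by (rule p0B)
  qed (simp add: E_def)
qed

end
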